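(* Let $m\ge2$, $n\ge1$ be integers. Let $\mathcal{A}\in\mathbb{SF}_{m,n}$ have no zero blocks, and let $\mathcal{P}=([n],\mathbb{E})$ be the $m$-uniform multi-hypergraph whose $(0,1)$ associated tensor is $\mathcal{A}$. Then the following are equivalent: (1) $\mathcal{A}$ is $\{0,1\}$-cp; (2) $\mathcal{P}$ is a union of complete blocks on a partition of the vertex set: there exist pairwise disjoint nonempty sets $V_1,\dots,V_q$ with $V_1\cup\dots\cup V_q=[n]$ (so $n_1+\dots+n_q=n$ where $n_i=|V_i|$) such that $\mathbb{E}$ is exactly the set of all multisets of size $m$ whose elements all lie in a single $V_i$ for some $i$; (3) there exist $q\ge1$ and vectors $\mathbf{u}_1,\dots,\mathbf{u}_q\in\{0,1\}^n$ with $\mathcal{A}=\sum_{j=1}^q\mathbf{u}_j^m$ such that the $n\times q$ matrix $U=[\mathbf{u}_1,\dots,\mathbf{u}_q]$ satisfies $U^{T}U=\mathrm{diag}(n_1,\dots,n_q)$ for positive integers $n_1,\dots,n_q$ with $n_1+\dots+n_q=n$.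
   Context: $S(m,n)=\{(i_1,\dots,i_m): i_k\in[n]\}$. $\mathbb{SF}_{m,n}$ is the set of symmetric $m$th order $n$-dimensional real tensors with all entries in $\{0,1\}$. For a nonempty $I\subseteq[n]$, the principal subtensor of $\mathcal{A}$ determined by $I$ is the tensor $(a_{i_1\cdots i_m})$ with all $i_k\in I$; a zero block is a principal subtensor all of whose entries are $0$. For $\mathbf{u}\in\mathbb{R}^n$, $\mathbf{u}^m$ is the tensor with entries $u_{i_1}\cdots u_{i_m}$. A symmetric tensor $\mathcal{A}$ is $\{0,1\}$-cp if $\mathcal{A}=\sum_{j=1}^q\mathbf{u}_j^m$ for some $q\ge1$ and $\mathbf{u}_j\in\{0,1\}^n$. An $m$-uniform multi-hypergraph on $[n]$ is a pair $([n],\mathbb{E})$ with $\mathbb{E}$ a set of multisets of elements of $[n]$, each of cardinality $m$ counting repetitions. Its $(0,1)$ associated tensor is the tensor $\mathcal{A}\in\mathbb{SF}_{m,n}$ with $a_{i_1\cdots i_m}=1$ if the multiset $\{i_1,\dots,i_m\}\in\mathbb{E}$ and $0$ otherwise. *)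

theory Defs
  imports Complex_Main "HOL-Library.Multiset"
begin

text \<open>Index tuples S(m,n): lists of length m with entries in [n] = {1..n}.
A tensor of order m and dimension n is a function on index lists (only its values on
S(m,n) matter).\<close>

definition S :: "nat \<Rightarrow> nat \<Rightarrow> nat list set" where
  "S m n = {xs. length xs = m \<and> set xs \<subseteq> {1..n}}"

definition symmetric_tensor :: "nat \<Rightarrow> nat \<Rightarrow> (nat list \<Rightarrow> real) \<Rightarrow> bool" where
  "symmetric_tensor m n A \<longleftrightarrow>
     (\<forall>xs\<in>S m n. \<forall>ys\<in>S m n. mset xs = mset ys \<longrightarrow> A xs = A ys)"

definition SF :: "nat \<Rightarrow> nat \<Rightarrow> (nat list \<Rightarrow> real) set" where
  "SF m n = {A. symmetric_tensor m n A \<and> (\<forall>xs\<in>S m n. A xs = 0 \<or> A xs = 1)}"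

definition has_zero_block :: "nat \<Rightarrow> nat \<Rightarrow> (nat list \<Rightarrow> real) \<Rightarrow> bool" where
  "has_zero_block m n A \<longleftrightarrow>
     (\<exists>I. I \<noteq> {} \<and> I \<subseteq> {1..n} \<and> (\<forall>xs. length xs = m \<and> set xs \<subseteq> I \<longrightarrow> A xs = 0))"

definition tpow :: "(nat \<Rightarrow> real) \<Rightarrow> nat list \<Rightarrow> real" where
  "tpow u xs = prod_list (map u xs)"

definition binary_vec :: "nat \<Rightarrow> (nat \<Rightarrow> real) \<Rightarrow> bool" where
  "binary_vec n u \<longleftrightarrow> (\<forall>i\<in>{1..n}. u i = 0 \<or> u i = 1)"

definition is_sum_of_powers :: "nat \<Rightarrow> nat \<Rightarrow> (nat list \<Rightarrow> real) \<Rightarrow> nat \<Rightarrow> (nat \<Rightarrow> nat \<Rightarrow> real) \<Rightarrow> bool" where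
  "is_sum_of_powers m n A q u \<longleftrightarrow> (\<forall>xs\<in>S m n. A xs = (\<Sum>j=1..q. tpow (u j) xs))"

definition zero_one_cp :: "nat \<Rightarrow> nat \<Rightarrow> (nat list \<Rightarrow> real) \<Rightarrow> bool" where
  "zero_one_cp m n A \<longleftrightarrow> symmetric_tensor m n A \<and>
     (\<exists>q u. q \<ge> 1 \<and> (\<forall>j\<in>{1..q}. binary_vec n (u j)) \<and> is_sum_of_powers m n A q u)"

definition uniform_multihypergraph :: "nat \<Rightarrow> nat \<Rightarrow> nat multiset set \<Rightarrow> bool" where
  "uniform_multihypergraph m n E \<longleftrightarrow> (\<forall>e\<in>E. size e = m \<and> set_mset e \<subseteq> {1..n})"

definition assoc_tensor :: "nat \<Rightarrow> nat \<Rightarrow> nat multiset set \<Rightarrow> (nat list \<Rightarrow> real) \<Rightarrow> bool" where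
  "assoc_tensor m n E A \<longleftrightarrow> A \<in> SF m n \<and>
     (\<forall>xs\<in>S m n. A xs = (if mset xs \<in> E then 1 else 0))"

end

theory Submission
  imports Defs
begin

lemma tpow_bin:
  assumes "binary_vec n u" "set xs \<subseteq> {1..n}"
  shows "tpow u xs = (if set xs \<subseteq> {i. u i = 1} then 1 else 0)"
  using assms(2)
proof (induction xs)
  case Nil
  then show ?case by (simp add: tpow_def)
next
  case (Cons a xs)
  have "tpow u (a # xs) = u a * tpow u xs" by (simp add: tpow_def)
  moreover have "u a = 0 \<or> u a = 1" using assms(1) Cons.prems by (auto simp: binary_vec_def)
  ultimately show ?case using Cons by auto
qed

lemma sum_ind_card:
  "finite J \<Longrightarrow> (\<Sum>j\<in>J. if P j then (1::real) else 0) = real (card {j\<in>J. P j})"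
  by (simp add: sum.If_cases Int_def conj_commute)

lemma sop_card:
  assumes "\<forall>j\<in>{1..q}. binary_vec n (u j)" "is_sum_of_powers m n A q u" "xs \<in> S m n"
  shows "A xs = real (card {j\<in>{1..q}. set xs \<subseteq> {i. u j i = 1}})"
proof -
  have sx: "set xs \<subseteq> {1..n}" using assms(3) by (simp add: S_def)
  have "A xs = (\<Sum>j=1..q. tpow (u j) xs)" using assms(2,3) by (simp add: is_sum_of_powers_def)
  also have "\<dots> = (\<Sum>j=1..q. if set xs \<subseteq> {i. u j i = 1} then 1 else 0)"
  proof (intro sum.cong refl)
    fix j assume "j \<in> {1..q}"
    then show "tpow (u j) xs = (if set xs \<subseteq> {i. u j i = 1} then 1 else 0)"
      using assms(1) sx tpow_bin by blast
  qed
  also have "\<dots> = real (card {j\<in>{1..q}. set xs \<subseteq> {i. u j i = 1}})"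
    by (rule sum_ind_card) simp
  finally show ?thesis .
qed

lemma mset_in_S:
  assumes "size M = m" "set_mset M \<subseteq> {1..n}" "mset xs = M"
  shows "xs \<in> S m n"
  using assms by (auto simp: S_def dest: arg_cong[where f=size])

lemma one_two:
  fixes m n :: nat and A :: "nat list \<Rightarrow> real" and E :: "nat multiset set"
  assumes "m \<ge> 2" and "n \<ge> 1"
    and AS: "A \<in> SF m n"
    and nz: "\<not> has_zero_block m n A"
    and un: "uniform_multihypergraph m n E"
    and at: "assoc_tensor m n E A"
    and bin: "\<forall>j\<in>{1..q}. binary_vec n (u j)" and sop: "is_sum_of_powers m n A q u"
  shows "\<exists>(q::nat) V. q \<ge> 1 \<and> (\<forall>i\<in>{1..q}. V i \<noteq> {})
              \<and> (\<forall>i\<in>{1..q}. \<forall>j\<in>{1..q}. i \<noteq> j \<longrightarrow> V i \<inter> V j = {})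
              \<and> (\<Union>i\<in>{1..q}. V i) = {1..n}
              \<and> E = {M. size M = m \<and> (\<exists>i\<in>{1..q}. set_mset M \<subseteq> V i)}"
proof -
  define supp where "supp j = {i\<in>{1..n}. u j i = 1}" for j
  have uniq: "\<exists>!j. j \<in> {1..q} \<and> u j i = 1" if i: "i \<in> {1..n}" for i
  proof -
    from nz have "\<exists>xs. length xs = m \<and> set xs \<subseteq> {i} \<and> A xs \<noteq> 0"
      unfolding has_zero_block_def using i by (metis empty_not_insert insert_subsetI empty_subsetI)
    then obtain xs where xs: "length xs = m" "set xs \<subseteq> {i}" "A xs \<noteq> 0" by blast
    have xsS: "xs \<in> S m n" using xs i by (auto simp: S_def)
    have "A xs = 1" using AS xsS xs(3) by (auto simp: SF_def)
    moreover have "set xs = {i}" using xs assms(1)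
      by (metis One_nat_def Suc_1 le_zero_eq length_0_conv not_one_le_zero set_empty subset_singletonD zero_neq_numeral)
    ultimately have "real (card {j\<in>{1..q}. u j i = 1}) = 1"
      using sop_card[OF bin sop xsS] by simp
    then have "card {j\<in>{1..q}. u j i = 1} = 1" by linarith
    then obtain j where "{j\<in>{1..q}. u j i = 1} = {j}" using card_1_singletonE by blast
    then show ?thesis by (auto simp: set_eq_iff)
  qed
  define J where "J = {j\<in>{1..q}. supp j \<noteq> {}}"
  have fJ: "finite J" by (simp add: J_def)
  obtain f where f: "bij_betw f {1..card J} J" using ex_bij_betw_nat_finite_1[OF fJ] by blast
  define V where "V k = supp (f k)" for k
  have fk: "f k \<in> J" if "k \<in> {1..card J}" for k using f that by (auto simp: bij_betw_def)
  have inJ: "\<exists>k\<in>{1..card J}. f k = j" if "j \<in> J" for j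
    using f that unfolding bij_betw_def by (metis imageE)
  have "1 \<in> {1..n}" using assms(2) by simp
  then obtain j0 where "j0 \<in> {1..q}" "u j0 1 = 1" using uniq by blast
  then have "j0 \<in> J" using \<open>1 \<in> {1..n}\<close> by (auto simp: J_def supp_def)
  then have c1: "card J \<ge> 1" using fJ by (metis One_nat_def Suc_leI card_gt_0_iff empty_iff)
  have disj: "supp j \<inter> supp j' = {}" if "j \<in> {1..q}" "j' \<in> {1..q}" "j \<noteq> j'" for j j'
    using uniq that by (auto simp: supp_def)
  have main: "E = {M. size M = m \<and> (\<exists>k\<in>{1..card J}. set_mset M \<subseteq> V k)}"
  proof (intro set_eqI iffI)
    fix M assume M: "M \<in> E"
    then have sM: "size M = m" "set_mset M \<subseteq> {1..n}" using un by (auto simp: uniform_multihypergraph_def)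
    obtain xs where xs: "mset xs = M" using ex_mset by blast
    have xsS: "xs \<in> S m n" using mset_in_S[OF sM xs] .
    have "A xs = 1" using at xsS M xs by (auto simp: assoc_tensor_def)
    then have "card {j\<in>{1..q}. set xs \<subseteq> {i. u j i = 1}} \<noteq> 0"
      using sop_card[OF bin sop xsS] by auto
    then obtain j where j: "j \<in> {1..q}" "set xs \<subseteq> {i. u j i = 1}"
      by (metis (no_types, lifting) card.empty empty_Collect_eq)
    have "xs \<noteq> []" using xsS assms(1) by (auto simp: S_def)
    then have ss: "set xs \<subseteq> supp j" using j xsS by (auto simp: supp_def S_def)
    then have "j \<in> J" using \<open>xs \<noteq> []\<close> j by (auto simp: J_def)
    then obtain k where "k \<in> {1..card J}" "f k = j" using inJ by blast
    show "M \<in> {M. size M = m \<and> (\<exists>k\<in>{1..card J}. set_mset M \<subseteq> V k)}"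
    proof -
      have "set_mset M = set xs" using xs by auto
      then have "set_mset M \<subseteq> V k" using ss \<open>f k = j\<close> unfolding V_def by simp
      then show ?thesis using sM(1) \<open>k \<in> {1..card J}\<close> unfolding mem_Collect_eq by (intro conjI bexI)
    qed
  next
    fix M assume "M \<in> {M. size M = m \<and> (\<exists>k\<in>{1..card J}. set_mset M \<subseteq> V k)}"
    then obtain k where k: "size M = m" "k \<in> {1..card J}" "set_mset M \<subseteq> V k" by blast
    have "V k \<subseteq> {1..n}" by (auto simp: V_def supp_def)
    then have sM: "set_mset M \<subseteq> {1..n}" using k by blast
    obtain xs where xs: "mset xs = M" using ex_mset by blast
    have xsS: "xs \<in> S m n" using mset_in_S[OF k(1) sM xs] .
    have "f k \<in> {j\<in>{1..q}. set xs \<subseteq> {i. u j i = 1}}"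
      using fk[OF k(2)] k(3) xs by (auto simp: J_def V_def supp_def)
    then have "card {j\<in>{1..q}. set xs \<subseteq> {i. u j i = 1}} \<noteq> 0" by auto
    then have "A xs \<noteq> 0" using sop_card[OF bin sop xsS] by auto
    then show "M \<in> E" using at xsS xs by (auto simp: assoc_tensor_def split: if_splits)
  qed
  show ?thesis
  proof (intro exI conjI)
    show "1 \<le> card J" by (rule c1)
    show "\<forall>i\<in>{1..card J}. V i \<noteq> {}"
    proof
      fix i assume "i \<in> {1..card J}"
      then have "f i \<in> J" by (rule fk)
      then show "V i \<noteq> {}" unfolding J_def V_def by blast
    qed
    show "\<forall>i\<in>{1..card J}. \<forall>j\<in>{1..card J}. i \<noteq> j \<longrightarrow> V i \<inter> V j = {}"
    proof (intro ballI impI)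
      fix i j assume ij: "i \<in> {1..card J}" "j \<in> {1..card J}" "i \<noteq> j"
      have "inj_on f {1..card J}" using f by (simp add: bij_betw_def)
      then have "f i \<noteq> f j" using ij by (meson inj_on_contraD)
      moreover have "f i \<in> {1..q}" "f j \<in> {1..q}" using fk[OF ij(1)] fk[OF ij(2)] unfolding J_def by blast+
      ultimately have "f i \<noteq> f j" "f i \<in> {1..q}" "f j \<in> {1..q}" by blast+
      then show "V i \<inter> V j = {}" using disj by (simp add: V_def)
    qed
    show "(\<Union>i\<in>{1..card J}. V i) = {1..n}"
    proof
      show "(\<Union>i\<in>{1..card J}. V i) \<subseteq> {1..n}" by (auto simp: V_def supp_def)
      show "{1..n} \<subseteq> (\<Union>i\<in>{1..card J}. V i)"
      proof
        fix i assume i: "i \<in> {1..n}"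
        then obtain j where j: "j \<in> {1..q}" "u j i = 1" using uniq by blast
        then have "j \<in> J" using i by (auto simp: J_def supp_def)
        then obtain k where "k \<in> {1..card J}" "f k = j" using inJ by blast
        then show "i \<in> (\<Union>i\<in>{1..card J}. V i)" using i j by (auto simp: V_def supp_def)
      qed
    qed
    show "E = {M. size M = m \<and> (\<exists>i\<in>{1..card J}. set_mset M \<subseteq> V i)}" by (rule main)
  qed
qed

lemma two_three:
  fixes m n q :: nat and A :: "nat list \<Rightarrow> real" and E :: "nat multiset set" and V :: "nat \<Rightarrow> nat set"
  assumes m2: "m \<ge> 2"
    and at: "assoc_tensor m n E A"
    and q1: "q \<ge> 1" and ne: "\<forall>i\<in>{1..q}. V i \<noteq> {}"
    and dj: "\<forall>i\<in>{1..q}. \<forall>j\<in>{1..q}. i \<noteq> j \<longrightarrow> V i \<inter> V j = {}"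
    and cov: "(\<Union>i\<in>{1..q}. V i) = {1..n}"
    and EE: "E = {M. size M = m \<and> (\<exists>i\<in>{1..q}. set_mset M \<subseteq> V i)}"
  shows "\<exists>q u nn. q \<ge> 1 \<and> (\<forall>j\<in>{1..q}. binary_vec n (u j))
              \<and> is_sum_of_powers m n A q u
              \<and> (\<forall>j\<in>{1..q}. nn j > (0::nat)) \<and> (\<Sum>j=1..q. nn j) = n
              \<and> (\<forall>j\<in>{1..q}. \<forall>k\<in>{1..q}.
                   (\<Sum>i=1..n. u j i * u k i) = (if j = k then real (nn j) else 0))"
proof -
  define u where "u j i = (if i \<in> V j then (1::real) else 0)" for j i
  have Vsub: "V j \<subseteq> {1..n}" if "j \<in> {1..q}" for j using cov that by blast
  have fV: "finite (V j)" if "j \<in> {1..q}" for j using Vsub[OF that] finite_subset by blast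
  have bin: "\<forall>j\<in>{1..q}. binary_vec n (u j)" by (simp add: binary_vec_def u_def)
  have supp: "{i. u j i = 1} = V j" for j by (auto simp: u_def)
  have sop: "is_sum_of_powers m n A q u"
    unfolding is_sum_of_powers_def
  proof
    fix xs assume xsS: "xs \<in> S m n"
    have sx: "set xs \<subseteq> {1..n}" and lx: "length xs = m" using xsS by (auto simp: S_def)
    have "(\<Sum>j=1..q. tpow (u j) xs) = (\<Sum>j=1..q. if set xs \<subseteq> V j then 1 else 0)"
    proof (intro sum.cong refl)
      fix j assume "j \<in> {1..q}"
      then have "tpow (u j) xs = (if set xs \<subseteq> {i. u j i = 1} then 1 else 0)"
        using bin sx tpow_bin by blast
      then show "tpow (u j) xs = (if set xs \<subseteq> V j then 1 else 0)" by (simp add: supp)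
    qed
    also have "\<dots> = real (card {j\<in>{1..q}. set xs \<subseteq> V j})" by (rule sum_ind_card) simp
    also have "\<dots> = (if mset xs \<in> E then 1 else 0)"
    proof (cases "\<exists>k\<in>{1..q}. set xs \<subseteq> V k")
      case True
      then obtain k where k: "k \<in> {1..q}" "set xs \<subseteq> V k" by blast
      have "xs \<noteq> []" using lx m2 by auto
      then obtain x where x: "x \<in> set xs" by (meson list.set_sel(1))
      have "{j\<in>{1..q}. set xs \<subseteq> V j} = {k}"
      proof (intro set_eqI iffI)
        fix j assume "j \<in> {j\<in>{1..q}. set xs \<subseteq> V j}"
        then have "j \<in> {1..q}" "x \<in> V j" using x by auto
        moreover have "x \<in> V k" using k x by auto
        ultimately show "j \<in> {k}" using dj k(1) by blast
      next
        fix j assume "j \<in> {k}" then show "j \<in> {j\<in>{1..q}. set xs \<subseteq> V j}" using k by simp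
      qed
      moreover have "mset xs \<in> E" using EE k lx by auto
      ultimately show ?thesis by simp
    next
      case False
      then have "{j\<in>{1..q}. set xs \<subseteq> V j} = {}" by auto
      moreover have "mset xs \<notin> E" using EE False by auto
      ultimately show ?thesis by simp
    qed
    also have "\<dots> = A xs" using at xsS by (simp add: assoc_tensor_def)
    finally show "A xs = (\<Sum>j=1..q. tpow (u j) xs)" by simp
  qed
  have orth: "(\<Sum>i=1..n. u j i * u k i) = (if j = k then real (card (V j)) else 0)"
    if jk: "j \<in> {1..q}" "k \<in> {1..q}" for j k
  proof -
    have "(\<Sum>i=1..n. u j i * u k i) = (\<Sum>i=1..n. if i \<in> V j \<inter> V k then 1 else 0)"
      by (intro sum.cong refl) (simp add: u_def)
    also have "\<dots> = real (card {i\<in>{1..n}. i \<in> V j \<inter> V k})" by (rule sum_ind_card) simp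
    also have "{i\<in>{1..n}. i \<in> V j \<inter> V k} = V j \<inter> V k" using Vsub[OF jk(1)] by auto
    finally show ?thesis using dj jk by auto
  qed
  have cardsum: "(\<Sum>j=1..q. card (V j)) = n"
  proof -
    have "card (\<Union>i\<in>{1..q}. V i) = (\<Sum>j=1..q. card (V j))"
      by (rule card_UN_disjoint) (use fV dj in auto)
    then show ?thesis using cov by simp
  qed
  have pos: "\<forall>j\<in>{1..q}. card (V j) > 0" using fV ne by (simp add: card_gt_0_iff)
  show ?thesis
    by (rule exI[of _ q], rule exI[of _ u], rule exI[of _ "\<lambda>j. card (V j)"])
       (use q1 bin sop pos cardsum orth in auto)
qed

theorem mainTheorem4:
  fixes m n :: nat and A :: "nat list \<Rightarrow> real" and E :: "nat multiset set"
  assumes "m \<ge> 2" and "n \<ge> 1"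
    and "A \<in> SF m n"
    and "\<not> has_zero_block m n A"
    and "uniform_multihypergraph m n E"
    and "assoc_tensor m n E A"
  shows "(zero_one_cp m n A \<longleftrightarrow>
           (\<exists>(q::nat) V. q \<ge> 1 \<and> (\<forall>i\<in>{1..q}. V i \<noteq> {})
              \<and> (\<forall>i\<in>{1..q}. \<forall>j\<in>{1..q}. i \<noteq> j \<longrightarrow> V i \<inter> V j = {})
              \<and> (\<Union>i\<in>{1..q}. V i) = {1..n}
              \<and> E = {M. size M = m \<and> (\<exists>i\<in>{1..q}. set_mset M \<subseteq> V i)}))
       \<and> (zero_one_cp m n A \<longleftrightarrow>
           (\<exists>q u nn. q \<ge> 1 \<and> (\<forall>j\<in>{1..q}. binary_vec n (u j))
              \<and> is_sum_of_powers m n A q u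
              \<and> (\<forall>j\<in>{1..q}. nn j > (0::nat)) \<and> (\<Sum>j=1..q. nn j) = n
              \<and> (\<forall>j\<in>{1..q}. \<forall>k\<in>{1..q}.
                   (\<Sum>i=1..n. u j i * u k i) = (if j = k then real (nn j) else 0))))"
  (is "(?C \<longleftrightarrow> ?P) \<and> (?C \<longleftrightarrow> ?U)")
proof -
  have CP: "?C \<Longrightarrow> ?P"
  proof -
    assume "?C"
    then obtain q u where "\<forall>j\<in>{1..q}. binary_vec n (u j)" "is_sum_of_powers m n A q u"
      unfolding zero_one_cp_def by blast
    then show ?P by (rule one_two[OF assms])
  qed
  have PU: "?P \<Longrightarrow> ?U"
  proof -
    assume "?P"
    then obtain q :: nat and V :: "nat \<Rightarrow> nat set" where "q \<ge> 1" "\<forall>i\<in>{1..q}. V i \<noteq> {}"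
      "\<forall>i\<in>{1..q}. \<forall>j\<in>{1..q}. i \<noteq> j \<longrightarrow> V i \<inter> V j = {}"
      "(\<Union>i\<in>{1..q}. V i) = {1..n}"
      "E = {M. size M = m \<and> (\<exists>i\<in>{1..q}. set_mset M \<subseteq> V i)}" by blast
    from two_three[OF assms(1) assms(6) this] show ?U .
  qed
  have UC: "?U \<Longrightarrow> ?C"
  proof -
    assume "?U"
    then obtain q :: nat and u :: "nat \<Rightarrow> nat \<Rightarrow> real" where "q \<ge> 1" "\<forall>j\<in>{1..q}. binary_vec n (u j)" "is_sum_of_powers m n A q u"
      by blast
    moreover have "symmetric_tensor m n A" using assms(3) by (simp add: SF_def)
    ultimately show ?C unfolding zero_one_cp_def by blast
  qed
  show ?thesis
  proof (intro conjI iffI)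
    show "?C \<Longrightarrow> ?P" by (rule CP)
    show "?P \<Longrightarrow> ?C" by (rule UC, rule PU)
    show "?C \<Longrightarrow> ?U" by (rule PU, rule CP)
    show "?U \<Longrightarrow> ?C" by (rule UC)
  qed
qed

end
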